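(* Let $\mathcal V$ be a finite state space and let $0 = t(0) < \dots$ be discrete diffusion times, with $s(i) < t(i)$ for $i=1,\dots,T$ denoting the pair of consecutive times used in the $i$-th reverse step. Let $p$ (source) and $q$ (target) be two discrete diffusion models on clean data $\mathbf x_0$ and latents $\mathbf z_t \in \mathcal V$ (or sequences thereof) that share the same Markov forward (noising) process, i.e. $p(\mathbf z_t \mid \mathbf x_0) = q(\mathbf z_t \mid \mathbf x_0)$ for all $t$ and the same forward transition kernels, and assume that the density ratio $q(\mathbf x_0)/p(\mathbf x_0)$ is well defined. Let the reverse target-domain model $q_{\psi^\star}(\mathbf z_{s(i)} \mid \mathbf z_{t(i)})$ be defined as a minimizer $$\psi^\star \in \arg\min_{\psi}\ \mathbb E_{q}\Big[\sum_{i=1}^{T} D_{\mathrm{KL}}\big(q(\mathbf z_{s(i)} \mid \mathbf z_{t(i)}, \mathbf x_0)\,\big\|\,q_\psi(\mathbf z_{s(i)} \mid \mathbf z_{t(i)})\big)\Big],$$ where $\mathbf x_0 \sim q$ and $\mathbf z_{t(i)} \sim q(\cdot \mid \mathbf x_0)$. Then $$q_{\psi^\star}(\mathbf z_{s(i)} \mid \mathbf z_{t(i)}) = \frac{p(\mathbf z_{s(i)} \mid \mathbf z_{t(i)})\ \mathbb E_{\mathbf x_0 \sim p(\cdot \mid \mathbf z_{s(i)})}\!\left[\frac{q(\mathbf x_0)}{p(\mathbf x_0)}\right]}{\sum_{\tilde{\mathbf z}_{s(i)}} p(\tilde{\mathbf z}_{s(i)} \mid \mathbf z_{t(i)})\ \mathbb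 E_{\mathbf x_0 \sim p(\cdot \mid \tilde{\mathbf z}_{s(i)})}\!\left[\frac{q(\mathbf x_0)}{p(\mathbf x_0)}\right]}.$$
   Context: $p(\mathbf z_{s}\mid \mathbf z_t)$ denotes the true reverse (backward) conditional of the source diffusion model (the distribution approximated by a source-trained denoiser), $p(\mathbf x_0 \mid \mathbf z_s)$ the source posterior of clean data given the latent at time $s$, and $q(\mathbf z_s \mid \mathbf z_t, \mathbf x_0)$ the true backward posterior of the target forward process. The minimization over $\psi$ is over conditional distributions $q_\psi(\cdot \mid \mathbf z_{t(i)})$ on the latent space (one for each step $i$ and each value of $\mathbf z_{t(i)}$). $D_{\mathrm{KL}}$ is the Kullback–Leibler divergence. *)

theory Defs
  imports "HOL-Probability.Probability_Mass_Function" "HOL-Library.Extended_Real"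
begin

definition KL :: "('v::finite \<Rightarrow> real) \<Rightarrow> 'v pmf \<Rightarrow> ereal" where
  "KL P Q = (\<Sum>z\<in>{z. P z > 0}.
      if pmf Q z = 0 then \<infinity> else ereal (P z * ln (P z / pmf Q z)))"

definition marg :: "'x::finite pmf \<Rightarrow> (real \<Rightarrow> 'x \<Rightarrow> 'v pmf) \<Rightarrow> real \<Rightarrow> 'v \<Rightarrow> real" where
  "marg r F a z = (\<Sum>x\<in>UNIV. pmf r x * pmf (F a x) z)"

text \<open>True backward posterior of the forward process: q(z_a | z_b, x0).\<close>
definition fwd_post :: "(real \<Rightarrow> 'x \<Rightarrow> 'v pmf) \<Rightarrow> (real \<Rightarrow> real \<Rightarrow> 'v \<Rightarrow> 'v pmf)
     \<Rightarrow> real \<Rightarrow> real \<Rightarrow> 'x \<Rightarrow> 'v \<Rightarrow> 'v \<Rightarrow> real" where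
  "fwd_post F K a b x zb za = pmf (F a x) za * pmf (K a b za) zb / pmf (F b x) zb"

text \<open>True reverse conditional of a model with clean-data law r: r(z_a | z_b).\<close>
definition rev_cond :: "'x::finite pmf \<Rightarrow> (real \<Rightarrow> 'x \<Rightarrow> 'v pmf) \<Rightarrow> (real \<Rightarrow> real \<Rightarrow> 'v \<Rightarrow> 'v pmf)
     \<Rightarrow> real \<Rightarrow> real \<Rightarrow> 'v \<Rightarrow> 'v \<Rightarrow> real" where
  "rev_cond r F K a b zb za = marg r F a za * pmf (K a b za) zb / marg r F b zb"

definition data_post :: "'x::finite pmf \<Rightarrow> (real \<Rightarrow> 'x \<Rightarrow> 'v pmf) \<Rightarrow> real \<Rightarrow> 'v \<Rightarrow> 'x \<Rightarrow> real" where
  "data_post r F a za x = pmf r x * pmf (F a x) za / marg r F a za"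

definition ratio_exp :: "'x::finite pmf \<Rightarrow> 'x pmf \<Rightarrow> (real \<Rightarrow> 'x \<Rightarrow> 'v pmf) \<Rightarrow> real \<Rightarrow> 'v \<Rightarrow> real" where
  "ratio_exp p q F a za = (\<Sum>x\<in>UNIV. data_post p F a za x * (pmf q x / pmf p x))"

definition objective :: "'x::finite pmf \<Rightarrow> (real \<Rightarrow> 'x \<Rightarrow> 'v::finite pmf) \<Rightarrow> (real \<Rightarrow> real \<Rightarrow> 'v \<Rightarrow> 'v pmf)
     \<Rightarrow> (nat \<Rightarrow> real) \<Rightarrow> (nat \<Rightarrow> real) \<Rightarrow> nat \<Rightarrow> (nat \<Rightarrow> 'v \<Rightarrow> 'v pmf) \<Rightarrow> ereal" where
  "objective q F K s t T \<psi> =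
     (\<Sum>x\<in>UNIV. \<Sum>i\<in>{1..T}. \<Sum>zt\<in>UNIV.
        ereal (pmf q x * pmf (F (t i) x) zt) * KL (fwd_post F K (s i) (t i) x zt) (\<psi> i zt))"

end

theory Submission
  imports Defs
begin

lemma ereal0_mult: "ereal 0 * (a::ereal) = 0"
  using ereal_zero_mult[of a] by (simp only: zero_ereal_def)

lemma pmf_of_fun:
  fixes f :: "'a::finite \<Rightarrow> real"
  assumes nn: "\<forall>x. f x \<ge> 0" and s1: "sum f UNIV = 1"
  shows "\<exists>Q. \<forall>x. pmf Q x = f x"
proof -
  have "(\<integral>\<^sup>+x. ennreal (f x) \<partial>count_space UNIV) = 1"
    using nn s1 by (simp add: nn_integral_count_space_finite sum_ennreal)
  then show ?thesis using pmf_embed_pmf[of f] nn by blast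
qed

lemma KL_fin:
  fixes P :: "'v::finite \<Rightarrow> real"
  assumes "\<forall>z. P z \<ge> 0" "\<forall>z. P z > 0 \<longrightarrow> pmf Q z > 0"
  shows "KL P Q = ereal (\<Sum>z\<in>UNIV. P z * ln (P z / pmf Q z))"
proof -
  have "KL P Q = (\<Sum>z\<in>{z. P z > 0}. ereal (P z * ln (P z / pmf Q z)))"
    unfolding KL_def using assms by (intro sum.cong) auto
  also have "\<dots> = ereal (\<Sum>z\<in>{z. P z > 0}. P z * ln (P z / pmf Q z))" by simp
  also have "(\<Sum>z\<in>{z. P z > 0}. P z * ln (P z / pmf Q z)) = (\<Sum>z\<in>UNIV. P z * ln (P z / pmf Q z))"
    using assms(1) by (intro sum.mono_neutral_left) (auto simp: order_le_less)
  finally show ?thesis .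
qed

lemma sum_not_minf:
  fixes f :: "'a \<Rightarrow> ereal"
  shows "(\<forall>x\<in>A. f x \<noteq> -\<infinity>) \<Longrightarrow> sum f A \<noteq> -\<infinity>"
  by (induct A rule: infinite_finite_induct) auto

lemma KL_not_minf: "KL P Q \<noteq> -\<infinity>"
  unfolding KL_def by (rule sum_not_minf) auto

lemma KL_inf:
  assumes "P z > 0" "pmf Q z = 0"
  shows "KL P Q = \<infinity>"
  unfolding KL_def using assms by (subst sum_Pinfty) auto

lemma wKL_not_minf:
  assumes "w \<ge> 0" shows "ereal w * KL P Q \<noteq> -\<infinity>"
  using assms KL_not_minf[of P Q] by (cases "KL P Q") (auto simp: ereal_mult_infty)

lemma sum_strict_ereal:
  fixes f g :: "'a \<Rightarrow> ereal"
  assumes "finite A" "a \<in> A" "\<forall>x\<in>A. g x \<le> f x" "g a < f a" "\<forall>x\<in>A. \<bar>g x\<bar> \<noteq> \<infinity>"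
  shows "sum g A < sum f A"
proof -
  have ga: "sum g A = g a + sum g (A - {a})" "sum f A = f a + sum f (A - {a})"
    using assms by (auto simp: sum.remove)
  have le: "sum g (A - {a}) \<le> sum f (A - {a})" using assms by (intro sum_mono) auto
  have fin: "\<bar>sum g (A - {a})\<bar> \<noteq> \<infinity>" using assms
  proof -
    have "sum g (A - {a}) \<noteq> \<infinity>" using assms by (auto simp: sum_Pinfty)
    moreover have "sum g (A - {a}) \<noteq> -\<infinity>" using assms by (intro sum_not_minf) auto
    ultimately show ?thesis by auto
  qed
  have "g a + sum g (A - {a}) < f a + sum g (A - {a})"
    using fin assms(4) by (cases "sum g (A - {a})"; cases "g a"; cases "f a") auto
  also have "\<dots> \<le> f a + sum f (A - {a})" using le by (simp add: add_left_mono)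
  finally show ?thesis using ga by simp
qed

lemma gibbs_term:
  fixes a b :: real
  assumes "a \<ge> 0" "b \<ge> 0" "a > 0 \<longrightarrow> b > 0"
  shows "a * ln (a / b) \<ge> a - b" and "a \<noteq> b \<Longrightarrow> a * ln (a / b) > a - b"
proof -
  show "a * ln (a / b) \<ge> a - b"
  proof (cases "a = 0")
    case False
    then have ab: "a > 0" "b > 0" using assms by auto
    have "ln (b / a) \<le> b / a - 1" using ab by (intro ln_le_minus_one) auto
    moreover have "ln (a / b) = - ln (b / a)" using ab by (simp add: ln_div)
    ultimately have "ln (a / b) \<ge> 1 - b / a" by simp
    then have "a * ln (a / b) \<ge> a * (1 - b / a)" using ab by (intro mult_left_mono) auto
    moreover have "a * (1 - b / a) = a - b" using ab by (simp add: field_simps)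
    ultimately show ?thesis by linarith
  qed (use assms in simp)
  assume ne: "a \<noteq> b"
  show "a * ln (a / b) > a - b"
  proof (cases "a = 0")
    case False
    then have ab: "a > 0" "b > 0" using assms by auto
    have "ln (b / a) \<le> b / a - 1" using ab by (intro ln_le_minus_one) auto
    moreover have "ln (b / a) \<noteq> b / a - 1" using ln_eq_minus_one[of "b/a"] ab ne by auto
    moreover have "ln (a / b) = - ln (b / a)" using ab by (simp add: ln_div)
    ultimately have "ln (a / b) > 1 - b / a" by simp
    then have "a * ln (a / b) > a * (1 - b / a)" using ab by (intro mult_strict_left_mono) auto
    moreover have "a * (1 - b / a) = a - b" using ab by (simp add: field_simps)
    ultimately show ?thesis by linarith
  qed (use assms ne in simp)
qed

lemma gibbs_strict:
  fixes A B :: "'v::finite \<Rightarrow> real"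
  assumes "\<forall>z. A z \<ge> 0" "\<forall>z. B z \<ge> 0" "sum A UNIV = 1" "sum B UNIV = 1"
    "\<forall>z. A z > 0 \<longrightarrow> B z > 0" "A \<noteq> B"
  shows "(\<Sum>z\<in>UNIV. A z * ln (A z / B z)) > 0"
proof -
  obtain z0 where z0: "A z0 \<noteq> B z0" using assms(6) by auto
  have "(\<Sum>z\<in>UNIV. A z - B z) < (\<Sum>z\<in>UNIV. A z * ln (A z / B z))"
  proof (rule sum_strict_mono_ex1)
    show "\<forall>z\<in>UNIV. A z - B z \<le> A z * ln (A z / B z)" using assms gibbs_term(1) by blast
    show "\<exists>z\<in>UNIV. A z - B z < A z * ln (A z / B z)" using assms z0 gibbs_term(2) by blast
  qed simp
  moreover have "(\<Sum>z\<in>UNIV. A z - B z) = 0" using assms by (simp add: sum_subtractf)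
  ultimately show ?thesis by simp
qed

lemma cross_min:
  fixes w :: "'x::finite \<Rightarrow> real" and P :: "'x \<Rightarrow> 'v::finite \<Rightarrow> real" and Qo :: "'v pmf"
  assumes w0: "\<forall>x. w x \<ge> 0" and P0: "\<forall>x z. P x z \<ge> 0"
    and P1: "\<forall>x. w x > 0 \<longrightarrow> sum (P x) UNIV = 1"
    and Wpos: "sum w UNIV > 0"
    and Qo: "\<forall>z. pmf Qo z = (\<Sum>x\<in>UNIV. w x * P x z) / sum w UNIV"
  shows "(\<Sum>x\<in>UNIV. ereal (w x) * KL (P x) Qo)
           = ereal (\<Sum>x\<in>UNIV. w x * (\<Sum>z\<in>UNIV. P x z * ln (P x z / pmf Qo z)))"
    and "Q \<noteq> Qo \<Longrightarrow> (\<Sum>x\<in>UNIV. ereal (w x) * KL (P x) Q) > (\<Sum>x\<in>UNIV. ereal (w x) * KL (P x) Qo)"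
proof -
  define W where "W = sum w UNIV"
  define m where "m z = (\<Sum>x\<in>UNIV. w x * P x z)" for z
  have mge: "m z \<ge> w x * P x z" for x z
    unfolding m_def using w0 P0 by (intro member_le_sum) auto
  have Qo': "pmf Qo z = m z / W" for z using Qo by (simp add: m_def W_def)
  have supp: "pmf Qo z > 0" if "w x > 0" "P x z > 0" for x z
  proof -
    have "m z > 0" using mge[of x z] that by (smt (verit) mult_pos_pos)
    then show ?thesis using Qo' Wpos W_def by simp
  qed
  have gen: "(\<Sum>x\<in>UNIV. ereal (w x) * KL (P x) Q)
           = ereal (\<Sum>x\<in>UNIV. w x * (\<Sum>z\<in>UNIV. P x z * ln (P x z / pmf Q z)))"
    if sQ: "\<forall>z. pmf Qo z > 0 \<longrightarrow> pmf Q z > 0" for Q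
  proof -
    have "ereal (w x) * KL (P x) Q = ereal (w x * (\<Sum>z\<in>UNIV. P x z * ln (P x z / pmf Q z)))" for x
    proof (cases "w x = 0")
      case False
      then have "w x > 0" using w0[rule_format, of x] by linarith
      then have "KL (P x) Q = ereal (\<Sum>z\<in>UNIV. P x z * ln (P x z / pmf Q z))"
        using supp sQ P0 by (intro KL_fin) auto
      then show ?thesis by simp
    next
      case True
      have "ereal (w x) * KL (P x) Q = 0" unfolding True by (rule ereal0_mult)
      moreover have "ereal (w x * (\<Sum>z\<in>UNIV. P x z * ln (P x z / pmf Q z))) = 0"
        unfolding True by simp
      ultimately show ?thesis by (rule trans[OF _ sym])
    qed
    then show ?thesis by simp
  qed
  show eq1: "(\<Sum>x\<in>UNIV. ereal (w x) * KL (P x) Qo)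
           = ereal (\<Sum>x\<in>UNIV. w x * (\<Sum>z\<in>UNIV. P x z * ln (P x z / pmf Qo z)))"
    by (rule gen) auto
  assume ne: "Q \<noteq> Qo"
  show "(\<Sum>x\<in>UNIV. ereal (w x) * KL (P x) Q) > (\<Sum>x\<in>UNIV. ereal (w x) * KL (P x) Qo)"
  proof (cases "\<forall>z. pmf Qo z > 0 \<longrightarrow> pmf Q z > 0")
    case False
    then obtain z where z: "pmf Qo z > 0" "pmf Q z = 0"
      using pmf_nonneg[of Q] by (metis order_le_less)
    then have "m z > 0" using Qo' Wpos W_def by (simp add: zero_less_divide_iff)
    have "\<exists>x. w x * P x z > 0"
    proof (rule ccontr)
      assume "\<not> (\<exists>x. w x * P x z > 0)"
      then have "\<forall>x. w x * P x z \<le> 0" by (simp add: not_less)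
      then have "m z \<le> 0" unfolding m_def by (intro sum_nonpos) auto
      with \<open>m z > 0\<close> show False by simp
    qed
    then obtain x where xp: "w x * P x z > 0" by blast
    have x: "w x > 0" "P x z > 0" using xp w0[rule_format, of x] P0[rule_format, of x z]
      by (auto simp: zero_less_mult_iff)
    then have "KL (P x) Q = \<infinity>" using KL_inf z by blast
    then have "ereal (w x) * KL (P x) Q = \<infinity>" using x by simp
    then have "(\<Sum>x\<in>UNIV. ereal (w x) * KL (P x) Q) = \<infinity>"
      by (subst sum_Pinfty) auto
    then show ?thesis using eq1 by simp
  next
    case True
    define C where "C Q' = (\<Sum>x\<in>UNIV. w x * (\<Sum>z\<in>UNIV. P x z * ln (P x z / pmf Q' z)))" for Q'
    have termeq: "w x * (P x z * ln (P x z / pmf Q z)) - w x * (P x z * ln (P x z / pmf Qo z))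
        = w x * P x z * ln (pmf Qo z / pmf Q z)" for x z
    proof (cases "w x * P x z = 0")
      case False
      then have pos: "w x > 0" "P x z > 0" using w0 P0
        by (metis mult_eq_0_iff order_le_less)+
      then have "pmf Qo z > 0" "pmf Q z > 0" using supp True by auto
      then show ?thesis using pos by (simp add: ln_div algebra_simps)
    qed auto
    have mW: "m z = W * pmf Qo z" for z using Qo' Wpos W_def by simp
    have neq: "pmf Qo \<noteq> pmf Q"
    proof
      assume "pmf Qo = pmf Q"
      then have "Qo = Q" by (intro pmf_eqI) simp
      then show False using ne by simp
    qed
    have s1: "sum (pmf R) UNIV = 1" for R :: "'v pmf" by (rule sum_pmf_eq_1) auto
    have "C Q - C Qo = (\<Sum>x\<in>UNIV. \<Sum>z\<in>UNIV. w x * P x z * ln (pmf Qo z / pmf Q z))"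
      unfolding C_def sum_subtractf[symmetric]
      by (intro sum.cong refl) (simp only: sum_distrib_left sum_subtractf[symmetric] termeq)
    also have "\<dots> = (\<Sum>z\<in>UNIV. m z * ln (pmf Qo z / pmf Q z))"
      unfolding m_def by (subst sum.swap) (simp only: sum_distrib_right)
    also have "\<dots> = W * (\<Sum>z\<in>UNIV. pmf Qo z * ln (pmf Qo z / pmf Q z))"
      by (simp only: mW sum_distrib_left mult.assoc)
    also have "\<dots> > 0"
    proof (rule mult_pos_pos)
      show "W > 0" using Wpos W_def by simp
      show "(\<Sum>z\<in>UNIV. pmf Qo z * ln (pmf Qo z / pmf Q z)) > 0"
        using True neq s1 by (intro gibbs_strict) auto
    qed
    finally have "C Q > C Qo" by simp
    then show ?thesis using gen[OF True] eq1 C_def by simp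
  qed
qed



lemma formula:
  fixes p q :: "'x::finite pmf" and F :: "real \<Rightarrow> 'x \<Rightarrow> 'v::finite pmf"
  assumes markov: "\<forall>x z'. pmf (F b x) z' = (\<Sum>z\<in>UNIV. pmf (F a x) z * pmf (K a b z) z')"
    and ratio_ok: "\<forall>x. pmf q x > 0 \<longrightarrow> pmf p x > 0"
    and Wp: "marg q F b zt > 0"
  shows "(\<Sum>x\<in>UNIV. pmf q x * pmf (F b x) zt * fwd_post F K a b x zt zs) / marg q F b zt
     = rev_cond p F K a b zt zs * ratio_exp p q F a zs
       / (\<Sum>zs'\<in>UNIV. rev_cond p F K a b zt zs' * ratio_exp p q F a zs')"
proof -
  have m1: "(\<Sum>x\<in>UNIV. pmf q x * pmf (F b x) zt * fwd_post F K a b x zt y)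
      = pmf (K a b y) zt * marg q F a y" for y
    unfolding marg_def sum_distrib_left
  proof (intro sum.cong refl)
    fix x
    show "pmf q x * pmf (F b x) zt * fwd_post F K a b x zt y = pmf (K a b y) zt * (pmf q x * pmf (F a x) y)"
    proof (cases "pmf (F b x) zt = 0")
      case True
      have "pmf (F a x) y * pmf (K a b y) zt \<le> (\<Sum>z\<in>UNIV. pmf (F a x) z * pmf (K a b z) zt)"
        by (intro member_le_sum) auto
      then have "pmf (F a x) y * pmf (K a b y) zt = 0" using True markov
        by (metis antisym mult_nonneg_nonneg pmf_nonneg)
      then show ?thesis using True by (auto simp: fwd_post_def)
    next
      case False
      then show ?thesis by (simp add: fwd_post_def)
    qed
  qed
  have r1: "marg p F a y * ratio_exp p q F a y = marg q F a y" for y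
  proof (cases "marg p F a y = 0")
    case True
    have h: "pmf p x * pmf (F a x) y = 0" for x
      using True unfolding marg_def
      by (subst (asm) sum_nonneg_eq_0_iff) auto
    have "pmf q x * pmf (F a x) y = 0" for x
    proof (cases "pmf q x = 0")
      case False
      then have "pmf p x > 0" using ratio_ok pmf_nonneg[of q x] by auto
      then show ?thesis using h[of x] by simp
    qed simp
    then have "marg q F a y = 0" unfolding marg_def by (intro sum.neutral ballI)
    then show ?thesis using True by simp
  next
    case False
    have "marg p F a y * ratio_exp p q F a y
        = (\<Sum>x\<in>UNIV. pmf p x * pmf (F a x) y * (pmf q x / pmf p x))"
      unfolding ratio_exp_def data_post_def sum_distrib_left
    proof (intro sum.cong refl)
      fix x
      have "\<And>b c. marg p F a y * (b / marg p F a y * c) = b * c" using False by simp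
      then show "marg p F a y * (pmf p x * pmf (F a x) y / marg p F a y * (pmf q x / pmf p x))
          = pmf p x * pmf (F a x) y * (pmf q x / pmf p x)" .
    qed
    also have "\<dots> = marg q F a y" unfolding marg_def
    proof (intro sum.cong refl)
      fix x show "pmf p x * pmf (F a x) y * (pmf q x / pmf p x) = pmf q x * pmf (F a x) y"
        using ratio_ok[rule_format, of x] pmf_nonneg[of q x] by (cases "pmf p x = 0") (auto simp: order_le_less)
    qed
    finally show ?thesis .
  qed
  have Mpt: "marg p F b zt > 0"
  proof -
    have "\<exists>x. pmf q x * pmf (F b x) zt > 0"
    proof (rule ccontr)
      assume "\<not> (\<exists>x. pmf q x * pmf (F b x) zt > 0)"
      then have "\<forall>x. pmf q x * pmf (F b x) zt \<le> 0" by (simp add: not_less)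
      then have "marg q F b zt \<le> 0" unfolding marg_def by (intro sum_nonpos) auto
      with Wp show False by simp
    qed
    then obtain x where x: "pmf q x * pmf (F b x) zt > 0" by blast
    then have "pmf q x > 0" "pmf (F b x) zt > 0"
      using pmf_nonneg[of q x] pmf_nonneg[of "F b x" zt] by (auto simp: zero_less_mult_iff)
    then have "pmf p x > 0" "pmf (F b x) zt > 0" using ratio_ok by auto
    then have "pmf p x * pmf (F b x) zt > 0" by simp
    moreover have "pmf p x * pmf (F b x) zt \<le> marg p F b zt" unfolding marg_def
      by (intro member_le_sum) auto
    ultimately show ?thesis by simp
  qed
  have N: "rev_cond p F K a b zt y * ratio_exp p q F a y = pmf (K a b y) zt * marg q F a y / marg p F b zt" for y
    using r1[of y] unfolding rev_cond_def by (simp add: field_simps)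
  have sumKm: "(\<Sum>y\<in>UNIV. pmf (K a b y) zt * marg q F a y) = marg q F b zt"
    unfolding marg_def sum_distrib_left
    apply (subst sum.swap)
    apply (subst markov)
    apply (simp add: sum_distrib_left mult_ac)
    done
  show ?thesis
    unfolding m1 N sum_divide_distrib[symmetric] sumKm using Mpt Wp by (simp add: field_simps)
qed


theorem theorem1:
  fixes p q :: "'x::finite pmf"
    and F :: "real \<Rightarrow> 'x \<Rightarrow> 'v::finite pmf"
    and K :: "real \<Rightarrow> real \<Rightarrow> 'v \<Rightarrow> 'v pmf"
    and t s :: "nat \<Rightarrow> real" and T :: nat
    and \<psi>star :: "nat \<Rightarrow> 'v \<Rightarrow> 'v pmf"
  assumes t0: "t 0 = 0"
    and t_mono: "strict_mono t"
    and st: "\<forall>i\<in>{1..T}. s i < t i"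
    and markov: "\<forall>i\<in>{1..T}. \<forall>x z'. pmf (F (t i) x) z' =
                    (\<Sum>z\<in>UNIV. pmf (F (s i) x) z * pmf (K (s i) (t i) z) z')"
    and ratio_ok: "\<forall>x. pmf q x > 0 \<longrightarrow> pmf p x > 0"
    and minimizer: "\<forall>\<psi>. objective q F K s t T \<psi>star \<le> objective q F K s t T \<psi>"
  shows "\<forall>i\<in>{1..T}. \<forall>zt. marg q F (t i) zt > 0 \<longrightarrow> (\<forall>zs.
           pmf (\<psi>star i zt) zs =
             rev_cond p F K (s i) (t i) zt zs * ratio_exp p q F (s i) zs
             / (\<Sum>zs'\<in>UNIV. rev_cond p F K (s i) (t i) zt zs' * ratio_exp p q F (s i) zs'))"
proof (intro ballI allI impI)
  fix i zt zs assume i: "i \<in> {1..T}" and Wp: "marg q F (t i) zt > 0"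
  define w where "w j z x = pmf q x * pmf (F (t j) x) z" for j z x
  define P where "P j z x = fwd_post F K (s j) (t j) x z" for j z x
  define G where "G j z Q = (\<Sum>x\<in>UNIV. ereal (w j z x) * KL (P j z x) Q)" for j z Q
  define m where "m j z y = (\<Sum>x\<in>UNIV. w j z x * P j z x y)" for j z y
  have Wdef: "sum (w j z) UNIV = marg q F (t j) z" for j z by (simp add: w_def marg_def)
  have w0: "\<forall>x. w j z x \<ge> 0" for j z by (simp add: w_def)
  have P0: "\<forall>x y. P j z x y \<ge> 0" for j z by (simp add: P_def fwd_post_def)
  have P1: "\<forall>x. w j z x > 0 \<longrightarrow> sum (P j z x) UNIV = 1" if j: "j \<in> {1..T}" for j z
  proof (intro allI impI)
    fix x assume "w j z x > 0"
    then have pos: "pmf (F (t j) x) z > 0" unfolding w_def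
      by (metis order_le_less pmf_nonneg zero_less_mult_iff)
    have "sum (P j z x) UNIV = (\<Sum>y\<in>UNIV. pmf (F (s j) x) y * pmf (K (s j) (t j) y) z) / pmf (F (t j) x) z"
      unfolding P_def fwd_post_def by (simp add: sum_divide_distrib)
    also have "\<dots> = 1" using markov j pos by simp
    finally show "sum (P j z x) UNIV = 1" .
  qed
  have ex: "\<exists>Q. \<forall>y. pmf Q y = m j z y / marg q F (t j) z"
    if j: "j \<in> {1..T}" and W: "marg q F (t j) z > 0" for j z
  proof (rule pmf_of_fun)
    show "\<forall>y. m j z y / marg q F (t j) z \<ge> 0" using W w0 P0 unfolding m_def
      by (auto intro!: divide_nonneg_pos sum_nonneg)
    have "(\<Sum>y\<in>UNIV. m j z y) = (\<Sum>x\<in>UNIV. w j z x * sum (P j z x) UNIV)"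
      unfolding m_def by (subst sum.swap) (simp add: sum_distrib_left)
    also have "\<dots> = (\<Sum>x\<in>UNIV. w j z x)"
    proof (intro sum.cong refl)
      fix x show "w j z x * sum (P j z x) UNIV = w j z x"
        using P1[OF j, of z] w0[of j z] by (cases "w j z x = 0") (auto simp: order_le_less)
    qed
    finally show "(\<Sum>y\<in>UNIV. m j z y / marg q F (t j) z) = 1"
      using W Wdef by (simp add: sum_divide_distrib[symmetric])
  qed
  define \<psi>o where "\<psi>o j z = (if j \<in> {1..T} \<and> marg q F (t j) z > 0
      then (SOME Q. \<forall>y. pmf Q y = m j z y / marg q F (t j) z) else \<psi>star j z)" for j z
  have \<psi>o_pmf: "pmf (\<psi>o j z) y = m j z y / marg q F (t j) z"
    if "j \<in> {1..T}" "marg q F (t j) z > 0" for j z y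
    using someI_ex[OF ex[OF that]] that by (simp add: \<psi>o_def)
  have cm: "(\<exists>c. G j z (\<psi>o j z) = ereal c) \<and> (\<forall>Q. Q \<noteq> \<psi>o j z \<longrightarrow> G j z Q > G j z (\<psi>o j z))"
    if j: "j \<in> {1..T}" and W: "marg q F (t j) z > 0" for j z
  proof -
    have a: "\<forall>y. pmf (\<psi>o j z) y = (\<Sum>x\<in>UNIV. w j z x * P j z x y) / sum (w j z) UNIV"
      using \<psi>o_pmf[OF j W] Wdef m_def by simp
    note c = cross_min[OF w0 P0 P1[OF j] _ a]
    show ?thesis using c W Wdef unfolding G_def by auto
  qed
  have Wz: "G j z Q = 0" if W: "\<not> marg q F (t j) z > 0" for j z Q
  proof -
    have "sum (w j z) UNIV = 0" using W Wdef[of j z] w0[of j z]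
      by (metis order_le_less sum_nonneg)
    then have "w j z x = 0" for x using w0[of j z] by (simp add: sum_nonneg_eq_0_iff)
    then have "ereal (w j z x) * KL (P j z x) Q = 0" for x
    proof -
      assume "\<And>x. w j z x = 0"
      then have "w j z x = 0" .
      then show ?thesis using ereal0_mult by simp
    qed
    then show ?thesis unfolding G_def by (intro sum.neutral ballI)
  qed
  have obj: "objective q F K s t T \<psi> = (\<Sum>pr\<in>{1..T} \<times> UNIV. G (fst pr) (snd pr) (\<psi> (fst pr) (snd pr)))" for \<psi>
  proof -
    have "objective q F K s t T \<psi> = (\<Sum>j\<in>{1..T}. \<Sum>x\<in>UNIV. \<Sum>z\<in>UNIV. ereal (w j z x) * KL (P j z x) (\<psi> j z))"
      unfolding objective_def w_def P_def by (rule sum.swap)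
    also have "\<dots> = (\<Sum>j\<in>{1..T}. \<Sum>z\<in>UNIV. G j z (\<psi> j z))"
      unfolding G_def by (intro sum.cong refl) (rule sum.swap)
    also have "\<dots> = (\<Sum>pr\<in>{1..T} \<times> UNIV. G (fst pr) (snd pr) (\<psi> (fst pr) (snd pr)))"
      by (simp add: sum.cartesian_product case_prod_beta)
    finally show ?thesis .
  qed
  have eq: "\<psi>star i zt = \<psi>o i zt"
  proof (rule ccontr)
    assume ne: "\<psi>star i zt \<noteq> \<psi>o i zt"
    have "(\<Sum>pr\<in>{1..T} \<times> UNIV. G (fst pr) (snd pr) (\<psi>o (fst pr) (snd pr)))
        < (\<Sum>pr\<in>{1..T} \<times> UNIV. G (fst pr) (snd pr) (\<psi>star (fst pr) (snd pr)))"
    proof (rule sum_strict_ereal)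
      show "finite ({1..T} \<times> (UNIV :: 'v set))" by simp
      show "(i, zt) \<in> {1..T} \<times> UNIV" using i by simp
      show "G (fst (i, zt)) (snd (i, zt)) (\<psi>o (fst (i, zt)) (snd (i, zt)))
          < G (fst (i, zt)) (snd (i, zt)) (\<psi>star (fst (i, zt)) (snd (i, zt)))"
        using cm[OF i Wp] ne by simp
      show "\<forall>pr\<in>{1..T} \<times> UNIV. G (fst pr) (snd pr) (\<psi>o (fst pr) (snd pr))
          \<le> G (fst pr) (snd pr) (\<psi>star (fst pr) (snd pr))"
      proof
        fix pr :: "nat \<times> 'v" assume pr: "pr \<in> {1..T} \<times> UNIV"
        obtain j z where jz: "pr = (j, z)" by fastforce
        have j: "j \<in> {1..T}" using pr jz by simp
        show "G (fst pr) (snd pr) (\<psi>o (fst pr) (snd pr)) \<le> G (fst pr) (snd pr) (\<psi>star (fst pr) (snd pr))"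
        proof (cases "marg q F (t j) z > 0")
          case True
          then show ?thesis using cm[OF j True, THEN conjunct2, rule_format, of "\<psi>star j z"] jz
            by (cases "\<psi>star j z = \<psi>o j z") auto
        next
          case False
          then show ?thesis using jz by (simp add: \<psi>o_def)
        qed
      qed
      show "\<forall>pr\<in>{1..T} \<times> UNIV. \<bar>G (fst pr) (snd pr) (\<psi>o (fst pr) (snd pr))\<bar> \<noteq> \<infinity>"
      proof
        fix pr :: "nat \<times> 'v" assume pr: "pr \<in> {1..T} \<times> UNIV"
        obtain j z where jz: "pr = (j, z)" by fastforce
        have j: "j \<in> {1..T}" using pr jz by simp
        show "\<bar>G (fst pr) (snd pr) (\<psi>o (fst pr) (snd pr))\<bar> \<noteq> \<infinity>"
        proof (cases "marg q F (t j) z > 0")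
          case True
          then show ?thesis using cm[OF j True, THEN conjunct1] jz by auto
        next
          case False
          then show ?thesis using jz Wz by simp
        qed
      qed
    qed
    then have "objective q F K s t T \<psi>o < objective q F K s t T \<psi>star" using obj by simp
    then show False using minimizer by (metis leD)
  qed
  have "pmf (\<psi>star i zt) zs = m i zt zs / marg q F (t i) zt" using eq \<psi>o_pmf[OF i Wp] by simp
  also have "\<dots> = (\<Sum>x\<in>UNIV. pmf q x * pmf (F (t i) x) zt * fwd_post F K (s i) (t i) x zt zs) / marg q F (t i) zt"
    by (simp add: m_def w_def P_def)
  also have "\<dots> = rev_cond p F K (s i) (t i) zt zs * ratio_exp p q F (s i) zs
       / (\<Sum>zs'\<in>UNIV. rev_cond p F K (s i) (t i) zt zs' * ratio_exp p q F (s i) zs')"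
    using markov i ratio_ok Wp by (intro formula) auto
  finally show "pmf (\<psi>star i zt) zs = rev_cond p F K (s i) (t i) zt zs * ratio_exp p q F (s i) zs
       / (\<Sum>zs'\<in>UNIV. rev_cond p F K (s i) (t i) zt zs' * ratio_exp p q F (s i) zs')" .
qed

end
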